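(* Under the standing assumptions below, let $U\subset G$ be a finite subset contained in an elliptic subgroup of $G$. Then $E(U)\leqslant10\delta$. If, in addition, $|U|\geqslant11N_0$, then $\lambda_0(U)\leqslant2\kappa_0+12\delta$.
   Context: Standing assumptions: $X$ is a geodesic $\delta$--hyperbolic space (distance $|x-y|$, Gromov product $(p,q)_x=\frac12(|p-x|+|q-x|-|p-q|)$, $(p,r)_x\geqslant\min\{(p,q)_x,(q,r)_x\}-\delta$); $N_0\geqslant1$; either $\delta>0$ and $\kappa_0\geqslant\delta$, or $\delta=0$, $X$ a simplicial tree with edges of length $\rho_0$ and $\kappa_0\geqslant\rho_0$. $G$ acts by isometries, $(\kappa_0,N_0)$--acylindrically: for all $x,y$ with $|x-y|\geqslant\kappa_0$ at most $N_0$ elements $g$ satisfy $|gx-x|\leqslant100\delta$, $|gy-y|\leqslant100\delta$. An elliptic subgroup is a subgroup with bounded orbits in $X$. For finite $U\subset G$, $E(U):=\inf_{x\in X}\frac1{|U|}\sum_{u\in U}|ux-x|$; a point $x_0\in X$ is fixed with $\frac1{|U|}\sum_{u\in U}|ux_0-x_0|\leqslant E(U)+\delta$, and $\lambda_0(U):=\max_{u\in U}|ux_0-x_0|$. *)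

theory Defs
  imports "HOL-Analysis.Analysis" "HOL-Algebra.Group"
begin

text \<open>The space X is the whole (metric) type 'a, with distance dist.\<close>

definition gromov_product :: "'a::metric_space \<Rightarrow> 'a \<Rightarrow> 'a \<Rightarrow> real" where
  "gromov_product p q x = (dist p x + dist q x - dist p q) / 2"

definition geodesic_space :: "'a::metric_space itself \<Rightarrow> bool" where
  "geodesic_space TYPE('a) \<longleftrightarrow>
     (\<forall>x y::'a. \<exists>\<gamma>::real \<Rightarrow> 'a. \<gamma> 0 = x \<and> \<gamma> (dist x y) = y \<and>
        (\<forall>s\<in>{0..dist x y}. \<forall>t\<in>{0..dist x y}. dist (\<gamma> s) (\<gamma> t) = \<bar>s - t\<bar>))"

definition gromov_hyperbolic :: "'a::metric_space itself \<Rightarrow> real \<Rightarrow> bool" where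
  "gromov_hyperbolic TYPE('a) \<delta> \<longleftrightarrow>
     (\<forall>p q r x::'a. gromov_product p r x \<ge>
        min (gromov_product p q x) (gromov_product q r x) - \<delta>)"

text \<open>Geodesic segment between v and w (unique in a 0-hyperbolic geodesic space).\<close>
definition seg :: "'a::metric_space \<Rightarrow> 'a \<Rightarrow> 'a set" where
  "seg v w = {x. dist v x + dist x w = dist v w}"

text \<open>The (geodesic, 0-hyperbolic) space is the metric realisation of a simplicial tree
  all of whose edges have length rho: there is a vertex set V, distinct vertices are at
  distance at least rho, every point lies on an edge (a segment between two vertices at
  distance exactly rho), and two distinct edges meet only in vertices.\<close>
definition simplicial_tree :: "'a::metric_space itself \<Rightarrow> real \<Rightarrow> bool" where
  "simplicial_tree TYPE('a) \<rho> \<longleftrightarrow> \<rho> > 0 \<and> geodesic_space TYPE('a) \<and> gromov_hyperbolic TYPE('a) 0 \<and>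
     (\<exists>V::'a set.
        (\<forall>v\<in>V. \<forall>w\<in>V. v \<noteq> w \<longrightarrow> dist v w \<ge> \<rho>) \<and>
        (\<forall>x. \<exists>v\<in>V. \<exists>w\<in>V. dist v w = \<rho> \<and> x \<in> seg v w) \<and>
        (\<forall>v\<in>V. \<forall>w\<in>V. \<forall>v'\<in>V. \<forall>w'\<in>V. dist v w = \<rho> \<longrightarrow> dist v' w' = \<rho> \<longrightarrow>
            {v, w} \<noteq> {v', w'} \<longrightarrow> seg v w \<inter> seg v' w' \<subseteq> V))"

definition isometric_action :: "('g, 'b) monoid_scheme \<Rightarrow> ('g \<Rightarrow> 'a::metric_space \<Rightarrow> 'a) \<Rightarrow> bool" where
  "isometric_action G act \<longleftrightarrow> group G \<and>
     (\<forall>x. act \<one>\<^bsub>G\<^esub> x = x) \<and>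
     (\<forall>g\<in>carrier G. \<forall>h\<in>carrier G. \<forall>x. act (g \<otimes>\<^bsub>G\<^esub> h) x = act g (act h x)) \<and>
     (\<forall>g\<in>carrier G. \<forall>x y. dist (act g x) (act g y) = dist x y)"

definition acylindrical :: "('g, 'b) monoid_scheme \<Rightarrow> ('g \<Rightarrow> 'a::metric_space \<Rightarrow> 'a) \<Rightarrow>
    real \<Rightarrow> real \<Rightarrow> nat \<Rightarrow> bool" where
  "acylindrical G act \<delta> \<kappa> N \<longleftrightarrow>
     (\<forall>x y. dist x y \<ge> \<kappa> \<longrightarrow>
        finite {g \<in> carrier G. dist (act g x) x \<le> 100 * \<delta> \<and> dist (act g y) y \<le> 100 * \<delta>} \<and>
        card {g \<in> carrier G. dist (act g x) x \<le> 100 * \<delta> \<and> dist (act g y) y \<le> 100 * \<delta>} \<le> N)"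

definition elliptic_subgroup :: "('g, 'b) monoid_scheme \<Rightarrow> ('g \<Rightarrow> 'a::metric_space \<Rightarrow> 'a) \<Rightarrow> 'g set \<Rightarrow> bool" where
  "elliptic_subgroup G act H \<longleftrightarrow> subgroup H G \<and> (\<forall>x. bounded ((\<lambda>h. act h x) ` H))"

definition avg_disp :: "('g \<Rightarrow> 'a::metric_space \<Rightarrow> 'a) \<Rightarrow> 'g set \<Rightarrow> 'a \<Rightarrow> real" where
  "avg_disp act U x = (\<Sum>u\<in>U. dist (act u x) x) / real (card U)"

definition energy :: "('g \<Rightarrow> 'a::metric_space \<Rightarrow> 'a) \<Rightarrow> 'g set \<Rightarrow> real" where
  "energy act U = (INF x. avg_disp act U x)"

text \<open>lambda_0(U) computed at a point x0.\<close>
definition max_disp :: "('g \<Rightarrow> 'a::metric_space \<Rightarrow> 'a) \<Rightarrow> 'g set \<Rightarrow> 'a \<Rightarrow> real" where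
  "max_disp act U x0 = Max ((\<lambda>u. dist (act u x0) x0) ` U)"

end

theory Submission
  imports Defs
begin

lemma midpoint_bound:
  fixes c1 c2 :: "'a::metric_space" and \<delta> :: real
  assumes geod: "geodesic_space TYPE('a)" and hyp: "gromov_hyperbolic TYPE('a) \<delta>"
  shows "\<exists>m. (\<forall>y. dist y m \<le> max (dist c1 y) (dist c2 y) - dist c1 c2 / 2 + 2 * \<delta>)"
proof -
  let ?D = "dist c1 c2"
  obtain \<gamma> :: "real \<Rightarrow> 'a" where g0: "\<gamma> 0 = c1" and gD: "\<gamma> ?D = c2"
    and gi: "\<forall>s\<in>{0..?D}. \<forall>t\<in>{0..?D}. dist (\<gamma> s) (\<gamma> t) = \<bar>s - t\<bar>"
    using geod unfolding geodesic_space_def by blast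
  define m where "m = \<gamma> (?D/2)"
  have D0: "0 \<le> ?D" by simp
  have d1: "dist c1 m = ?D/2"
  proof -
    have "dist (\<gamma> 0) (\<gamma> (?D/2)) = \<bar>0 - ?D/2\<bar>" using gi D0 by simp
    then show ?thesis using g0 D0 unfolding m_def by simp
  qed
  have d2: "dist c2 m = ?D/2"
  proof -
    have "dist (\<gamma> ?D) (\<gamma> (?D/2)) = \<bar>?D - ?D/2\<bar>" using gi D0 by simp
    then show ?thesis using gD D0 unfolding m_def by simp
  qed
  show ?thesis
  proof (intro exI allI)
    fix y
    have h: "gromov_product c1 c2 m \<ge> min (gromov_product c1 y m) (gromov_product y c2 m) - \<delta>"
      using hyp unfolding gromov_hyperbolic_def by blast
    have z: "gromov_product c1 c2 m = 0" unfolding gromov_product_def using d1 d2 by simp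
    show "dist y m \<le> max (dist c1 y) (dist c2 y) - ?D / 2 + 2 * \<delta>"
    proof -
      have "min (gromov_product c1 y m) (gromov_product y c2 m) \<le> \<delta>" using h z by linarith
      then have "gromov_product c1 y m \<le> \<delta> \<or> gromov_product y c2 m \<le> \<delta>" by (simp add: min_le_iff_disj)
      then show ?thesis
      proof
        assume "gromov_product c1 y m \<le> \<delta>"
        then have "dist c1 m + dist y m - dist c1 y \<le> 2 * \<delta>" unfolding gromov_product_def by simp
        then show ?thesis using d1 max.cobounded1[of "dist c1 y" "dist c2 y"] by linarith
      next
        assume "gromov_product y c2 m \<le> \<delta>"
        then have "dist y m + dist c2 m - dist y c2 \<le> 2 * \<delta>" unfolding gromov_product_def by simp
        then show ?thesis using d2 dist_commute[of y c2] max.cobounded2[of "dist c1 y" "dist c2 y"] by linarith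
      qed
    qed
  qed
qed

theorem proposition4p4:
  fixes G :: "('g, 'b) monoid_scheme"
    and act :: "'g \<Rightarrow> 'a::metric_space \<Rightarrow> 'a"
    and \<delta> \<kappa>0 \<rho>0 :: real and N0 :: nat
    and U H :: "'g set"
  assumes geod: "geodesic_space TYPE('a)"
    and hyp: "gromov_hyperbolic TYPE('a) \<delta>"
    and N0: "N0 \<ge> 1"
    and params: "(\<delta> > 0 \<and> \<kappa>0 \<ge> \<delta>) \<or>
                 (\<delta> = 0 \<and> simplicial_tree TYPE('a) \<rho>0 \<and> \<kappa>0 \<ge> \<rho>0)"
    and act: "isometric_action G act"
    and acyl: "acylindrical G act \<delta> \<kappa>0 N0"
    and ell: "elliptic_subgroup G act H"
    and U: "finite U" "U \<subseteq> H"
  shows "energy act U \<le> 10 * \<delta> \<and>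
         (card U \<ge> 11 * N0 \<longrightarrow>
            (\<forall>x0. avg_disp act U x0 \<le> energy act U + \<delta> \<longrightarrow>
                  max_disp act U x0 \<le> 2 * \<kappa>0 + 12 * \<delta>))"
proof -
  from act have grp: "group G" and one: "\<And>x. act \<one>\<^bsub>G\<^esub> x = x"
    and mult: "\<And>g h x. g \<in> carrier G \<Longrightarrow> h \<in> carrier G \<Longrightarrow> act (g \<otimes>\<^bsub>G\<^esub> h) x = act g (act h x)"
    and iso: "\<And>g x y. g \<in> carrier G \<Longrightarrow> dist (act g x) (act g y) = dist x y"
    unfolding isometric_action_def by auto
  from ell have sub: "subgroup H G" and bnd: "\<And>x. bounded ((\<lambda>h. act h x) ` H)"
    unfolding elliptic_subgroup_def by auto
  have HG: "H \<subseteq> carrier G" by (rule subgroup.subset[OF sub])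
  have dpos: "\<delta> \<ge> 0" using params by auto
  obtain x00 :: 'a where True by blast
  define Y where "Y = (\<lambda>h. act h x00) ` H"
  have oneH: "\<one>\<^bsub>G\<^esub> \<in> H" by (rule subgroup.one_closed[OF sub])
  have Yne: "Y \<noteq> {}" using oneH unfolding Y_def by blast
  have Yb: "bounded Y" unfolding Y_def by (rule bnd)
  define r where "r x = Sup ((\<lambda>y. dist x y) ` Y)" for x
  have bdd: "bdd_above ((\<lambda>y. dist x y) ` Y)" for x
  proof -
    obtain e where "\<forall>y\<in>Y. dist x y \<le> e" using Yb bounded_any_center by metis
    then show ?thesis by (auto intro: bdd_aboveI2)
  qed
  have r_ge: "dist x y \<le> r x" if "y \<in> Y" for x y
    unfolding r_def using bdd that by (auto intro: cSup_upper)
  have r_le: "r x \<le> B" if "\<And>y. y \<in> Y \<Longrightarrow> dist x y \<le> B" for x B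
    unfolding r_def using Yne that by (auto intro: cSup_least)
  have r_nonneg: "0 \<le> r x" for x
    using Yne r_ge by (meson ex_in_conv order_trans zero_le_dist)
  define rad where "rad = Inf (range r)"
  have rad_le: "rad \<le> r x" for x
    unfolding rad_def using r_nonneg by (auto intro!: cInf_lower bdd_belowI2)
  have exc: "\<exists>c. r c < rad + e" if "e > 0" for e
  proof -
    have "Inf (range r) < rad + e" using that rad_def by simp
    then show ?thesis using cInf_lessD[of "range r"] by blast
  qed
  have diam: "dist c1 c2 \<le> 2 * (R - rad) + 4 * \<delta>" if "r c1 \<le> R" "r c2 \<le> R" for c1 c2 R
  proof -
    obtain m where m: "\<And>y. dist y m \<le> max (dist c1 y) (dist c2 y) - dist c1 c2 / 2 + 2 * \<delta>"
      using midpoint_bound[OF geod hyp, of c1 c2] by blast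
    have "r m \<le> R - dist c1 c2 / 2 + 2 * \<delta>"
    proof (rule r_le)
      fix y assume "y \<in> Y"
      then have "dist c1 y \<le> R" "dist c2 y \<le> R" using r_ge that by (meson order_trans)+
      then show "dist m y \<le> R - dist c1 c2 / 2 + 2 * \<delta>" using m[of y] by (simp add: dist_commute)
    qed
    then have "dist c1 c2 / 2 \<le> R - rad + 2 * \<delta>" using rad_le[of m] by linarith
    then show ?thesis by argo
  qed
  have rinv: "r (act h x) = r x" if "h \<in> H" for h x
  proof -
    have hG: "h \<in> carrier G" using that HG by blast
    have ihH: "inv\<^bsub>G\<^esub> h \<in> H" by (rule subgroup.m_inv_closed[OF sub that])
    have ihG: "inv\<^bsub>G\<^esub> h \<in> carrier G" using ihH HG by blast
    have bk: "act (inv\<^bsub>G\<^esub> h) (act h x) = x"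
      using mult[OF ihG hG, of x] one group.l_inv[OF grp hG] by simp
    have "(\<lambda>y. dist (act h x) y) ` Y = (\<lambda>y. dist x y) ` Y"
    proof (rule equalityI; rule subsetI)
      fix d assume "d \<in> (\<lambda>y. dist (act h x) y) ` Y"
      then obtain k where k: "k \<in> H" "d = dist (act h x) (act k x00)" unfolding Y_def by blast
      have kG: "k \<in> carrier G" using k HG by blast
      have "d = dist (act (inv\<^bsub>G\<^esub> h) (act h x)) (act (inv\<^bsub>G\<^esub> h) (act k x00))"
        using k iso[OF ihG] by simp
      also have "\<dots> = dist x (act (inv\<^bsub>G\<^esub> h \<otimes>\<^bsub>G\<^esub> k) x00)" using bk mult[OF ihG kG] by simp
      finally show "d \<in> (\<lambda>y. dist x y) ` Y" unfolding Y_def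
        using subgroup.m_closed[OF sub ihH k(1)] by blast
    next
      fix d assume "d \<in> (\<lambda>y. dist x y) ` Y"
      then obtain k where k: "k \<in> H" "d = dist x (act k x00)" unfolding Y_def by blast
      have kG: "k \<in> carrier G" using k HG by blast
      have "d = dist (act h x) (act h (act k x00))" using k iso[OF hG] by simp
      also have "\<dots> = dist (act h x) (act (h \<otimes>\<^bsub>G\<^esub> k) x00)" using mult[OF hG kG] by simp
      finally show "d \<in> (\<lambda>y. dist (act h x) y) ` Y" unfolding Y_def
        using subgroup.m_closed[OF sub that k(1)] by blast
    qed
    then show ?thesis unfolding r_def by simp
  qed
  have disp: "\<exists>c. \<forall>h\<in>H. dist (act h c) c \<le> 2 * e + 4 * \<delta>" if epos: "e > 0" for e
  proof -
    obtain c where c: "r c < rad + e" using exc[OF epos] by blast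
    show ?thesis
    proof (intro exI ballI)
      fix h assume "h \<in> H"
      then have "r (act h c) \<le> rad + e" using rinv c by simp
      then show "dist (act h c) c \<le> 2 * e + 4 * \<delta>" using diam[of "act h c" "rad + e" c] c by simp
    qed
  qed
  have avg_nonneg: "0 \<le> avg_disp act U x" for x
    unfolding avg_disp_def by (simp add: sum_nonneg)
  have en_le: "energy act U \<le> avg_disp act U x" for x
    unfolding energy_def using avg_nonneg by (auto intro!: cInf_lower bdd_belowI2)
  have avg_bound: "avg_disp act U c \<le> B" if "\<forall>h\<in>H. dist (act h c) c \<le> B" "0 \<le> B" for c B
  proof -
    have "(\<Sum>u\<in>U. dist (act u c) c) \<le> (\<Sum>u\<in>U. B)" using that U by (intro sum_mono) auto
    then have "(\<Sum>u\<in>U. dist (act u c) c) \<le> real (card U) * B" by simp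
    then show ?thesis unfolding avg_disp_def using that(2)
      by (cases "card U = 0") (auto simp: divide_le_eq mult.commute)
  qed
  have E4: "energy act U \<le> 4 * \<delta>"
  proof (rule field_le_epsilon)
    fix e :: real assume e: "e > 0"
    obtain c where "\<forall>h\<in>H. dist (act h c) c \<le> 2 * (e/2) + 4 * \<delta>" using disp[of "e/2"] e half_gt_zero by blast
    then have "avg_disp act U c \<le> 2 * (e/2) + 4 * \<delta>" using avg_bound e dpos by simp
    then show "energy act U \<le> 4 * \<delta> + e" using en_le[of c] by simp
  qed
  have part2: "max_disp act U x0 \<le> 2 * \<kappa>0 + 12 * \<delta>"
    if cU: "card U \<ge> 11 * N0" and x0: "avg_disp act U x0 \<le> energy act U + \<delta>" for x0
  proof -
    have cpos: "card U > 0" using cU N0 by linarith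
    have Une: "U \<noteq> {}" using cpos by auto
    have sum_eq: "(\<Sum>u\<in>U. dist (act u x0) x0) = avg_disp act U x0 * real (card U)"
      unfolding avg_disp_def using cpos by simp
    have sum_le: "(\<Sum>u\<in>U. dist (act u x0) x0) \<le> 5 * \<delta> * real (card U)"
    proof -
      have "avg_disp act U x0 \<le> 5 * \<delta>" using x0 E4 by linarith
      then show ?thesis unfolding sum_eq using cpos by (intro mult_right_mono) auto
    qed
    have maxle: "max_disp act U x0 \<le> B" if "\<And>u. u \<in> U \<Longrightarrow> dist (act u x0) x0 \<le> B" for B
      unfolding max_disp_def using U(1) Une that by (subst Max_le_iff) auto
    show ?thesis
    proof (cases "\<delta> = 0")
      case True
      then obtain \<rho>0' where tree: "simplicial_tree TYPE('a) \<rho>0" "\<kappa>0 \<ge> \<rho>0" using params by auto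
      have "\<rho>0 > 0" using tree(1) unfolding simplicial_tree_def by blast
      then have k0: "\<kappa>0 \<ge> 0" using tree(2) by linarith
      have "(\<Sum>u\<in>U. dist (act u x0) x0) \<le> 0" using sum_le True by simp
      then have "(\<Sum>u\<in>U. dist (act u x0) x0) = 0"
        by (simp add: antisym sum_nonneg)
      then have "\<forall>u\<in>U. dist (act u x0) x0 = 0" using U(1) by (simp add: sum_nonneg_eq_0_iff)
      then show ?thesis using True k0 by (intro maxle) auto
    next
      case False
      then have dp: "\<delta> > 0" using dpos by linarith
      obtain c where c: "\<forall>h\<in>H. dist (act h c) c \<le> 2 * \<delta> + 4 * \<delta>" using disp[OF dp] by blast
      have close: "dist x0 c < \<kappa>0"
      proof (rule ccontr)
        assume "\<not> dist x0 c < \<kappa>0"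
        then have far: "dist x0 c \<ge> \<kappa>0" by simp
        define S where "S = {g \<in> carrier G. dist (act g x0) x0 \<le> 100 * \<delta> \<and> dist (act g c) c \<le> 100 * \<delta>}"
        have Sf: "finite S" and Sc: "card S \<le> N0" using acyl far unfolding acylindrical_def S_def by blast+
        define Gd where "Gd = {u \<in> U. dist (act u x0) x0 \<le> 100 * \<delta>}"
        define Bd where "Bd = U - Gd"
        have GdS: "Gd \<subseteq> S" 
        proof
          fix u assume "u \<in> Gd"
          then have uU: "u \<in> U" and ux: "dist (act u x0) x0 \<le> 100 * \<delta>" unfolding Gd_def by auto
          have uH: "u \<in> H" using uU U(2) by blast
          have "dist (act u c) c \<le> 6 * \<delta>" using c uH by auto
          then have "dist (act u c) c \<le> 100 * \<delta>" using dp by linarith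
          then show "u \<in> S" unfolding S_def using uH HG ux by blast
        qed
        have cGd: "card Gd \<le> N0" using card_mono[OF Sf GdS] Sc by linarith
        have "(\<Sum>u\<in>Bd. 100 * \<delta>) \<le> (\<Sum>u\<in>Bd. dist (act u x0) x0)"
          by (intro sum_mono) (auto simp: Bd_def Gd_def)
        also have "\<dots> \<le> (\<Sum>u\<in>U. dist (act u x0) x0)"
          by (intro sum_mono2) (auto simp: Bd_def U(1))
        finally have A: "real (card Bd) * (100 * \<delta>) \<le> (\<Sum>u\<in>U. dist (act u x0) x0)" by simp
        have "\<delta> * (100 * real (card Bd)) \<le> \<delta> * (5 * real (card U))"
          using A sum_le by (simp add: algebra_simps)
        then have cB: "100 * real (card Bd) \<le> 5 * real (card U)" using dp
          by (rule mult_left_le_imp_le)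
        have "card U = card Gd + card Bd" unfolding Bd_def
          using U(1) card_Diff_subset[of Gd U] card_mono[of U Gd] by (auto simp: Gd_def)
        then have "real (card U) = real (card Gd) + real (card Bd)" by simp
        moreover have "real (card U) \<ge> 11 * real N0" using cU by (simp add: of_nat_mono)
        moreover have "real N0 \<ge> 1" using N0 by simp
        moreover have "real (card Gd) \<le> real N0" using cGd by simp
        ultimately show False using cB by linarith
      qed
      show ?thesis
      proof (rule maxle)
        fix u assume uU: "u \<in> U"
        then have uG: "u \<in> carrier G" using U(2) HG by blast
        have "dist (act u x0) x0 \<le> dist (act u x0) (act u c) + dist (act u c) c + dist c x0"
          by (meson dist_triangle order_trans add_right_mono)
        also have "\<dots> \<le> \<kappa>0 + 6 * \<delta> + \<kappa>0"
        proof -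
          have d1: "dist (act u c) c \<le> 6 * \<delta>" using c uU U(2) by auto
          have d2: "dist (act u x0) (act u c) = dist x0 c" using iso[OF uG, of x0 c] .
          have d3: "dist c x0 = dist x0 c" by (rule dist_commute)
          show ?thesis using d1 d2 d3 close by linarith
        qed
        finally show "dist (act u x0) x0 \<le> 2 * \<kappa>0 + 12 * \<delta>" using dp by linarith
      qed
    qed
  qed
  have "energy act U \<le> 10 * \<delta>" using E4 dpos by linarith
  then show ?thesis using part2 by blast
qed

end
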